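(* Let $k$ be an algebraically closed field of characteristic zero, $\mathfrak g$ a nonzero finite-dimensional nilpotent Lie algebra over $k$, and $(A,\cdot)$ an LR-structure on $\mathfrak g$ such that the commuting family $\{L(x):x\in A\}$ has a single weight $\alpha$ on $A$ and $\alpha\ne0$. Then $A$ is commutative (so $\mathfrak g$ is abelian, and the zero product is a complete LR-structure on $\mathfrak g$).
   Context: An LR-algebra is a vector space $A$ with a bilinear product $\cdot$ satisfying $x\cdot(y\cdot z)=y\cdot(x\cdot z)$ and $(x\cdot y)\cdot z=(x\cdot z)\cdot y$ for all $x,y,z\in A$. An LR-structure on a Lie algebra $\mathfrak g$ is an LR-algebra product on the underlying vector space of $\mathfrak g$ with $x\cdot y-y\cdot x=[x,y]$. $L(x)y=x\cdot y$. An LR-structure is complete if all right multiplications $y\mapsto y\cdot x$ are nilpotent. "Single weight $\alpha$" means that each $L(x)$ has only the eigenvalue $\alpha(L(x))$, where $\alpha$ is a linear form on the span of the $L(x)$. *)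

theory Defs
  imports "HOL-Analysis.Finite_Cartesian_Product" "HOL-Computational_Algebra.Polynomial"
begin

definition alg_closed_field :: "'k::field itself \<Rightarrow> bool" where
  "alg_closed_field _ \<longleftrightarrow> (\<forall>p :: 'k poly. degree p \<noteq> 0 \<longrightarrow> (\<exists>x. poly p x = 0))"

text \<open>The finite-dimensional vector space A is k^n, n = CARD('n) \<ge> 1.
  A product m on it is bilinear.\<close>
definition bilinear_prod :: "('k::field ^ 'n \<Rightarrow> 'k ^ 'n \<Rightarrow> 'k ^ 'n) \<Rightarrow> bool" where
  "bilinear_prod m \<longleftrightarrow>
     (\<forall>a b x y z. m (a *s x + b *s y) z = a *s m x z + b *s m y z) \<and>
     (\<forall>a b x y z. m z (a *s x + b *s y) = a *s m z x + b *s m z y)"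

definition LR_algebra :: "('k::field ^ 'n \<Rightarrow> 'k ^ 'n \<Rightarrow> 'k ^ 'n) \<Rightarrow> bool" where
  "LR_algebra m \<longleftrightarrow> bilinear_prod m \<and>
     (\<forall>x y z. m x (m y z) = m y (m x z)) \<and>
     (\<forall>x y z. m (m x y) z = m (m x z) y)"

text \<open>Lie algebra (A, bracket) is nilpotent: some term of the lower central series vanishes,
  i.e. all iterated brackets [x1,[x2,...,[xN,y]...]] of length N vanish.\<close>
definition nilpotent_bracket :: "('v \<Rightarrow> 'v \<Rightarrow> 'v::zero) \<Rightarrow> bool" where
  "nilpotent_bracket br \<longleftrightarrow>
     (\<exists>N. \<forall>xs y. length xs = N \<longrightarrow> foldr br xs y = 0)"

definition is_eigenvalue :: "('k::field ^ 'n \<Rightarrow> 'k ^ 'n) \<Rightarrow> 'k \<Rightarrow> bool" where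
  "is_eigenvalue f lam \<longleftrightarrow> (\<exists>v. v \<noteq> 0 \<and> f v = lam *s v)"

text \<open>The family {L(x)} has single weight alpha: alpha is a linear form on span{L(x)}
  (which equals the image of L, L being linear), and each L(x) has only the eigenvalue alpha(L(x)).\<close>
definition single_weight ::
  "('k::field ^ 'n \<Rightarrow> 'k ^ 'n \<Rightarrow> 'k ^ 'n) \<Rightarrow> (('k ^ 'n \<Rightarrow> 'k ^ 'n) \<Rightarrow> 'k) \<Rightarrow> bool" where
  "single_weight m alpha \<longleftrightarrow>
     (\<forall>a b x y. alpha (\<lambda>v. a *s m x v + b *s m y v) = a * alpha (m x) + b * alpha (m y)) \<and>
     (\<forall>x lam. is_eigenvalue (m x) lam \<longrightarrow> lam = alpha (m x))"

end

theory Submission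
  imports Defs "HOL-Analysis.Cartesian_Space"
begin

theorem proposition2p5:
  fixes m :: "'k::field_char_0 ^ 'n::finite \<Rightarrow> 'k ^ 'n \<Rightarrow> 'k ^ 'n"
    and alpha :: "('k ^ 'n \<Rightarrow> 'k ^ 'n) \<Rightarrow> 'k"
  assumes "alg_closed_field TYPE('k)"
    and "LR_algebra m"
    and "nilpotent_bracket (\<lambda>x y. m x y - m y x)"
    and "single_weight m alpha"
    and "\<exists>x. alpha (m x) \<noteq> 0"
  shows "\<forall>x y. m x y = m y x"
proof -
  from assms(2) have bil: "bilinear_prod m"
    and lc: "\<And>x y z. m x (m y z) = m y (m x z)"
    and rc: "\<And>x y z. m (m x y) z = m (m x z) y"
    unfolding LR_algebra_def by auto
  from assms(4) have ev: "\<And>x lam. is_eigenvalue (m x) lam \<Longrightarrow> lam = alpha (m x)"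
    unfolding single_weight_def by auto
  from assms(5) obtain u where u: "alpha (m u) \<noteq> 0" by auto
  have r2: "\<And>a b x y z. m z (a *s x + b *s y) = a *s m z x + b *s m z y"
    using bil unfolding bilinear_prod_def by blast
  have lin: "Vector_Spaces.linear (*s) (*s) (m u)"
  proof -
    have "m u (b1 + b2) = m u b1 + m u b2" for b1 b2
      using r2[where a=1 and x=b1 and b=1 and y=b2 and z=u] by simp
    moreover have "m u (r *s b) = r *s m u b" for r b
      using r2[where a=r and x=b and b=0 and y=b and z=u] by simp
    ultimately show ?thesis
      unfolding Vector_Spaces.linear_iff using vec.vector_space_axioms by blast
  qed
  have inj: "inj (m u)"
  proof (rule injI)
    fix x y assume eq: "m u x = m u y"
    show "x = y"
    proof (rule ccontr)
      assume "x \<noteq> y"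
      hence "x - y \<noteq> 0" by simp
      moreover have "m u (x - y) = 0 *s (x - y)"
        using r2[where a=1 and x=x and b="-1" and y=y and z=u] eq by simp
      ultimately have "is_eigenvalue (m u) 0" unfolding is_eigenvalue_def by blast
      with ev u show False by fastforce
    qed
  qed
  have surj: "surj (m u)"
    using vec.linear_inj_imp_surj[OF lin inj] .
  have assoc: "m (m y z) x = m y (m z x)" for x y z
  proof -
    obtain w where w: "z = m u w" using surj by (metis surjD)
    have "m (m y z) x = m (m u (m y w)) x" using w lc by simp
    also have "\<dots> = m (m u x) (m y w)" by (rule rc)
    also have "\<dots> = m y (m (m u x) w)" by (rule lc)
    also have "\<dots> = m y (m z x)" using w rc by simp
    finally show ?thesis .
  qed
  show ?thesis
  proof (intro allI)
    fix x y
    obtain w where w: "y = m u w" using surj by (metis surjD)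
    have "m x y = m u (m x w)" using w lc by simp
    also have "\<dots> = m (m u x) w" by (rule assoc[symmetric])
    also have "\<dots> = m y x" using w rc by simp
    finally show "m x y = m y x" .
  qed
qed

end
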